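(* Let $c>0$, $T_{\max}>0$, let $M,K\ge1$ be integers and $\bm{r}^{\mathrm{mic}}_1,\dots,\bm{r}^{\mathrm{mic}}_M\in\mathbb{R}^3$ with $E_M=\{\bm{r}^{\mathrm{mic}}_m\}$. Let $\kappa:\mathbb{R}\to\mathbb{R}$ be continuous with $\kappa(0)>0$ and $\lim_{|t|\to+\infty}\kappa(t)=0$, and assume $$\forall\tau\in[0,T_{\max}],\qquad\int_0^{T_{\max}}\kappa(t-\tau)\,dt>0.$$ Then there exists $N'\in\mathbb{N}^*$ such that for all integers $N\ge N'$ and $f_s>0$ with $T_{\max}=(N-1)/f_s$, the operator $\Gamma^K$ (built with these $N$ and $f_s$) is amplitude lower-bounded, i.e. there is $C>0$ with $\|\Gamma^K(\bm{a},\bm{r})\|_2\ge C\sum_{k=1}^K a_k$ for all $(\bm{a},\bm{r})\in\mathbb{R}_+^K\times\mathscr{C}^K$.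
   Context: $\mathbb{R}_+=[0,+\infty)$, $\|\cdot\|_2$ is the Euclidean norm. Given $N$ and $f_s$, for $\bm{r}\in\mathbb{R}^3\setminus E_M$, $\gamma(\bm{r})\in\mathbb{R}^{MN}$ has components $\gamma_{m,n}(\bm{r})=\dfrac{\kappa\big(n/f_s-\|\bm{r}-\bm{r}^{\mathrm{mic}}_m\|_2/c\big)}{4\pi\|\bm{r}-\bm{r}^{\mathrm{mic}}_m\|_2}$, $1\le m\le M$, $0\le n\le N-1$. $\mathscr{C}=\bigcap_{m=1}^M\overline{B(\bm{r}^{\mathrm{mic}}_m,cT_{\max})}\setminus E_M$. $\Gamma^K(\bm{a},\bm{r})=\sum_{k=1}^K a_k\gamma(\bm{r}_k)$. *)

theory Defs
  imports "HOL-Analysis.Analysis"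
begin

text \<open>Microphones are indexed 0..M-1 (paper: 1..M), sources 0..K-1 (paper: 1..K),
  time samples n = 0..N-1. Points of R^3 are of type real^3.\<close>

definition gamma_comp ::
  "real \<Rightarrow> (real \<Rightarrow> real) \<Rightarrow> (nat \<Rightarrow> real^3) \<Rightarrow> real \<Rightarrow> real^3 \<Rightarrow> nat \<Rightarrow> nat \<Rightarrow> real" where
  "gamma_comp c kappa rmic fs r m n =
     kappa (real n / fs - norm (r - rmic m) / c) / (4 * pi * norm (r - rmic m))"

definition Gamma_comp ::
  "real \<Rightarrow> (real \<Rightarrow> real) \<Rightarrow> (nat \<Rightarrow> real^3) \<Rightarrow> real \<Rightarrow> nat \<Rightarrow> (nat \<Rightarrow> real) \<Rightarrow> (nat \<Rightarrow> real^3)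
    \<Rightarrow> nat \<Rightarrow> nat \<Rightarrow> real" where
  "Gamma_comp c kappa rmic fs K a r m n = (\<Sum>k<K. a k * gamma_comp c kappa rmic fs (r k) m n)"

definition Gamma_norm ::
  "real \<Rightarrow> (real \<Rightarrow> real) \<Rightarrow> nat \<Rightarrow> (nat \<Rightarrow> real^3) \<Rightarrow> nat \<Rightarrow> real \<Rightarrow> nat \<Rightarrow> (nat \<Rightarrow> real)
    \<Rightarrow> (nat \<Rightarrow> real^3) \<Rightarrow> real" where
  "Gamma_norm c kappa M rmic N fs K a r =
     sqrt (\<Sum>m<M. \<Sum>n<N. (Gamma_comp c kappa rmic fs K a r m n)\<^sup>2)"

definition Cset :: "real \<Rightarrow> real \<Rightarrow> nat \<Rightarrow> (nat \<Rightarrow> real^3) \<Rightarrow> (real^3) set" where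
  "Cset c Tmax M rmic = (\<Inter>m<M. cball (rmic m) (c * Tmax)) - rmic ` {..<M}"

definition amplitude_lower_bounded ::
  "real \<Rightarrow> real \<Rightarrow> (real \<Rightarrow> real) \<Rightarrow> nat \<Rightarrow> (nat \<Rightarrow> real^3) \<Rightarrow> nat \<Rightarrow> real \<Rightarrow> nat \<Rightarrow> bool" where
  "amplitude_lower_bounded c Tmax kappa M rmic N fs K \<longleftrightarrow>
     (\<exists>C>0. \<forall>a r. (\<forall>k<K. a k \<ge> 0 \<and> r k \<in> Cset c Tmax M rmic) \<longrightarrow>
         Gamma_norm c kappa M rmic N fs K a r \<ge> C * (\<Sum>k<K. a k))"

end

theory Submission
  imports Defs
begin

lemma riemann_err:
  fixes f :: "real \<Rightarrow> real" and h e :: real and n :: nat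
  assumes cont: "continuous_on UNIV f" and h: "h > 0" and e: "e \<ge> 0"
    and bnd: "\<And>i t. i < n \<Longrightarrow> t \<in> {real i * h..real (Suc i) * h} \<Longrightarrow> \<bar>f t - f (real i * h)\<bar> \<le> e"
  shows "\<bar>integral {0..real n * h} f - h * (\<Sum>i<n. f (real i * h))\<bar> \<le> real n * h * e"
  using bnd
proof (induction n)
  case 0
  then show ?case by simp
next
  case (Suc n)
  have IH: "\<bar>integral {0..real n * h} f - h * (\<Sum>i<n. f (real i * h))\<bar> \<le> real n * h * e"
    using Suc by auto
  have split: "integral {0..real n * h} f + integral {real n * h..real (Suc n) * h} f
      = integral {0..real (Suc n) * h} f"
    by (rule Henstock_Kurzweil_Integration.integral_combine) (use h in \<open>auto intro!: integrable_continuous_real continuous_on_subset[OF cont]\<close>)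
  have c2: "continuous_on {real n * h..real (Suc n) * h} (\<lambda>t. f t - f (real n * h))"
    by (intro continuous_intros continuous_on_subset[OF cont]) auto
  have "norm (integral {real n * h..real (Suc n) * h} (\<lambda>t. f t - f (real n * h))) \<le> e * (real (Suc n) * h - real n * h)"
    by (rule integral_bound) (use h c2 Suc.prems in auto)
  moreover have "integral {real n * h..real (Suc n) * h} (\<lambda>t. f t - f (real n * h))
     = integral {real n * h..real (Suc n) * h} f - h * f (real n * h)"
    using h by (subst integral_diff) (auto intro!: integrable_continuous_real continuous_on_subset[OF cont] simp: algebra_simps)
  ultimately have last: "\<bar>integral {real n * h..real (Suc n) * h} f - h * f (real n * h)\<bar> \<le> h * e"
    by (simp add: algebra_simps)
  show ?case
    using IH last split[symmetric] by (simp add: algebra_simps abs_le_iff) 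
qed

theorem corollary2:
  fixes c Tmax :: real and M K :: nat and rmic :: "nat \<Rightarrow> real^3"
    and kappa :: "real \<Rightarrow> real"
  assumes "c > 0" and "Tmax > 0" and "M \<ge> 1" and "K \<ge> 1"
    and "continuous_on UNIV kappa" and "kappa 0 > 0"
    and "(kappa \<longlongrightarrow> 0) at_infinity"
    and "\<forall>\<tau>\<in>{0..Tmax}. integral {0..Tmax} (\<lambda>t. kappa (t - \<tau>)) > 0"
  shows "\<exists>N'::nat. N' \<ge> 1 \<and>
           (\<forall>N::nat. \<forall>fs::real. N \<ge> N' \<and> fs > 0 \<and> Tmax = (real N - 1) / fs \<longrightarrow>
              amplitude_lower_bounded c Tmax kappa M rmic N fs K)"
proof -
  note c = assms(1) and T = assms(2) and cont = assms(5) and ipos = assms(8)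
  define S where "S = {-Tmax..Tmax}"
  have uc: "uniformly_continuous_on S kappa"
    unfolding S_def by (rule compact_uniformly_continuous[OF continuous_on_subset[OF cont]]) auto
  define I where "I \<tau> = integral {0..Tmax} (\<lambda>t. kappa (t - \<tau>))" for \<tau>
  have intg: "(\<lambda>t. kappa (t - \<tau>)) integrable_on {a..b}" for \<tau> a b
    by (intro integrable_continuous_real continuous_on_compose2[OF cont]) (auto intro!: continuous_intros)
  have Icont: "continuous_on {0..Tmax} I"
    unfolding continuous_on_iff
  proof (intro ballI allI impI)
    fix \<tau> e :: real assume \<tau>: "\<tau> \<in> {0..Tmax}" and e: "0 < e"
    obtain d where d: "d > 0" and dd: "\<And>x x'. x \<in> S \<Longrightarrow> x' \<in> S \<Longrightarrow> dist x' x < d \<Longrightarrow> dist (kappa x') (kappa x) < e / (2 * Tmax)"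
      using uc e T unfolding uniformly_continuous_on_def
      by (metis divide_pos_pos mult_pos_pos zero_less_numeral)
    show "\<exists>d>0. \<forall>x'\<in>{0..Tmax}. dist x' \<tau> < d \<longrightarrow> dist (I x') (I \<tau>) < e"
    proof (intro exI[of _ d] conjI ballI impI d)
      fix \<tau>' assume \<tau>': "\<tau>' \<in> {0..Tmax}" and dt: "dist \<tau>' \<tau> < d"
      have "norm (integral {0..Tmax} (\<lambda>t. kappa (t - \<tau>') - kappa (t - \<tau>))) \<le> e / (2 * Tmax) * (Tmax - 0)"
      proof (rule integral_bound)
        show "continuous_on {0..Tmax} (\<lambda>t. kappa (t - \<tau>') - kappa (t - \<tau>))"
          by (intro continuous_intros continuous_on_compose2[OF cont]) (auto intro!: continuous_intros)
        fix t assume t: "t \<in> {0..Tmax}"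
        have "dist (kappa (t - \<tau>')) (kappa (t - \<tau>)) < e / (2 * Tmax)"
          using t \<tau> \<tau>' dt by (intro dd) (auto simp: S_def dist_real_def)
        then show "norm (kappa (t - \<tau>') - kappa (t - \<tau>)) \<le> e / (2 * Tmax)"
          by (simp add: dist_real_def)
      qed (use T in auto)
      also have "\<dots> < e" using T e by (simp add: field_simps)
      finally show "dist (I \<tau>') (I \<tau>) < e"
        unfolding I_def dist_real_def by (subst (asm) integral_diff) (auto intro!: intg)
    qed
  qed
  obtain \<tau>0 where \<tau>0: "\<tau>0 \<in> {0..Tmax}" and \<tau>0min: "\<And>\<tau>. \<tau> \<in> {0..Tmax} \<Longrightarrow> I \<tau>0 \<le> I \<tau>"
    using continuous_attains_inf[OF compact_Icc _ Icont] T by auto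
  define \<delta> where "\<delta> = I \<tau>0"
  have \<delta>: "\<delta> > 0" using ipos \<tau>0 by (auto simp: \<delta>_def I_def)
  have Ige: "\<And>\<tau>. \<tau> \<in> {0..Tmax} \<Longrightarrow> I \<tau> \<ge> \<delta>" using \<tau>0min \<delta>_def by auto
  obtain t1 where t1: "t1 \<in> S" and t1max: "\<And>x. x \<in> S \<Longrightarrow> \<bar>kappa x\<bar> \<le> \<bar>kappa t1\<bar>"
  proof -
    have "continuous_on S (\<lambda>x. \<bar>kappa x\<bar>)"
      by (intro continuous_intros continuous_on_subset[OF cont]) auto
    then show ?thesis using continuous_attains_sup[of S "\<lambda>x. \<bar>kappa x\<bar>"] T that
      by (auto simp: S_def)
  qed
  define B where "B = \<bar>kappa t1\<bar> + 1"
  have B: "B > 0" and Bb: "\<And>x. x \<in> S \<Longrightarrow> \<bar>kappa x\<bar> \<le> B"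
    using t1max by (force simp: B_def)+
  define \<epsilon> where "\<epsilon> = \<delta> / (4 * Tmax)"
  have \<epsilon>: "\<epsilon> > 0" using \<delta> T by (simp add: \<epsilon>_def)
  obtain \<eta> where \<eta>: "\<eta> > 0" and \<eta>d: "\<And>x x'. x \<in> S \<Longrightarrow> x' \<in> S \<Longrightarrow> dist x' x < \<eta> \<Longrightarrow> dist (kappa x') (kappa x) < \<epsilon>"
    using uc \<epsilon> unfolding uniformly_continuous_on_def by metis
  obtain k :: nat where k: "Tmax / \<eta> + 4 * Tmax * B / \<delta> < real k"
    using reals_Archimedean2 by blast
  have k1: "Tmax / \<eta> < real k" and k2: "4 * Tmax * B / \<delta> < real k"
    using k T \<eta> B \<delta> by (smt (verit, ccfv_SIG) divide_pos_pos mult_pos_pos zero_less_numeral)+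
  have kpos: "real k > 0" using k1 T \<eta> by (smt (verit) divide_pos_pos)
  show ?thesis
  proof (intro exI[of _ "Suc k"] conjI allI impI)
    show "1 \<le> Suc k" by simp
  next
    fix N :: nat and fs :: real
    assume asm: "Suc k \<le> N \<and> 0 < fs \<and> Tmax = (real N - 1) / fs"
    then have N: "Suc k \<le> N" and fs: "fs > 0" and TN: "Tmax = (real N - 1) / fs" by auto
    define n1 where "n1 = N - 1"
    have Nn1: "N = Suc n1" using N by (simp add: n1_def)
    define h where "h = 1 / fs"
    have h: "h > 0" using fs by (simp add: h_def)
    have n1h: "real n1 * h = Tmax" using TN Nn1 by (simp add: h_def)
    have kn1: "real k \<le> real n1" using N by (simp add: n1_def)
    have hk: "h \<le> Tmax / real k"
      using n1h kn1 kpos h T by (simp add: field_simps) (metis mult_left_mono of_nat_le_iff less_imp_le)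
    have h\<eta>: "h < \<eta>"
      using hk k1 kpos \<eta> T by (smt (verit, ccfv_SIG) divide_less_eq mult.commute pos_divide_less_eq)
    have hB: "h * B < \<delta> / 4"
    proof -
      have "h * B \<le> Tmax / real k * B" using mult_right_mono[OF hk, of B] B by simp
      also have "\<dots> < \<delta> / 4" using k2 kpos \<delta> by (simp add: field_simps)
      finally show ?thesis .
    qed
    have key: "h * (\<Sum>n<N. kappa (real n * h - \<tau>)) \<ge> \<delta> / 2" if \<tau>: "\<tau> \<in> {0..Tmax}" for \<tau>
    proof -
      have "\<bar>integral {0..real n1 * h} (\<lambda>t. kappa (t - \<tau>)) - h * (\<Sum>i<n1. kappa (real i * h - \<tau>))\<bar> \<le> real n1 * h * \<epsilon>"
      proof (rule riemann_err)
        show "continuous_on UNIV (\<lambda>t. kappa (t - \<tau>))"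
          by (intro continuous_on_compose2[OF cont]) (auto intro!: continuous_intros)
        fix i t assume i: "i < n1" and t: "t \<in> {real i * h..real (Suc i) * h}"
        have "real (Suc i) * h \<le> real n1 * h" using i h by (intro mult_right_mono) auto
        then have tT: "t \<le> Tmax" "real i * h \<le> Tmax" using t n1h h by auto
        have t0: "0 \<le> real i * h" using h by simp
        have "dist (kappa (t - \<tau>)) (kappa (real i * h - \<tau>)) < \<epsilon>"
        proof (rule \<eta>d)
          show "real i * h - \<tau> \<in> S" "t - \<tau> \<in> S" using tT t0 t \<tau> by (auto simp: S_def)
          have "t - real i * h \<le> h" using t by (simp add: algebra_simps)
          then show "dist (t - \<tau>) (real i * h - \<tau>) < \<eta>" using t h\<eta> by (simp add: dist_real_def)
        qed
        then show "\<bar>kappa (t - \<tau>) - kappa (real i * h - \<tau>)\<bar> \<le> \<epsilon>" by (simp add: dist_real_def)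
      qed (use h \<epsilon> in auto)
      then have e1: "\<bar>I \<tau> - h * (\<Sum>i<n1. kappa (real i * h - \<tau>))\<bar> \<le> \<delta> / 4"
        using n1h T by (simp add: I_def \<epsilon>_def)
      have "\<bar>kappa (real n1 * h - \<tau>)\<bar> \<le> B" using n1h \<tau> by (intro Bb) (auto simp: S_def)
      then have e2: "\<bar>h * kappa (real n1 * h - \<tau>)\<bar> \<le> h * B" using h by (simp add: abs_mult)
      have "h * (\<Sum>n<N. kappa (real n * h - \<tau>)) = h * (\<Sum>i<n1. kappa (real i * h - \<tau>)) + h * kappa (real n1 * h - \<tau>)"
        by (simp add: Nn1 algebra_simps)
      then show ?thesis using e1 e2 hB Ige[OF \<tau>] unfolding abs_le_iff by linarith
    qed
    define \<beta> where "\<beta> = fs * \<delta> / (8 * pi * c * Tmax)"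
    have \<beta>: "\<beta> > 0" using fs \<delta> c T by (simp add: \<beta>_def)
    show "amplitude_lower_bounded c Tmax kappa M rmic N fs K"
      unfolding amplitude_lower_bounded_def
    proof (intro exI[of _ "\<beta> / sqrt (real N)"] conjI allI impI)
      show "\<beta> / sqrt (real N) > 0" using \<beta> N by simp
      fix a :: "nat \<Rightarrow> real" and r :: "nat \<Rightarrow> real^3" assume ar: "\<forall>k<K. 0 \<le> a k \<and> r k \<in> Cset c Tmax M rmic"
      have g: "(\<Sum>n<N. gamma_comp c kappa rmic fs (r j) 0 n) \<ge> \<beta>" if j: "j < K" for j
      proof -
        have rj: "r j \<in> cball (rmic 0) (c * Tmax)" "r j \<noteq> rmic 0"
          using ar j assms(3) by (auto simp: Cset_def)
        define d where "d = norm (r j - rmic 0)"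
        have d: "d > 0" "d \<le> c * Tmax" using rj by (auto simp: d_def dist_norm norm_minus_commute)
        have \<tau>: "d / c \<in> {0..Tmax}" using d c by (auto simp: field_simps)
        have "(\<Sum>n<N. gamma_comp c kappa rmic fs (r j) 0 n) = (\<Sum>n<N. kappa (real n * h - d / c)) / (4 * pi * d)"
          by (simp add: gamma_comp_def d_def h_def sum_divide_distrib)
        moreover have "(\<Sum>n<N. kappa (real n * h - d / c)) \<ge> fs * \<delta> / 2"
          using key[OF \<tau>] fs by (simp add: h_def field_simps)
        moreover have "fs * \<delta> / 2 / (4 * pi * d) \<le> (\<Sum>n<N. kappa (real n * h - d / c)) / (4 * pi * d)"
          using calculation(2) d by (intro divide_right_mono) auto
        moreover have "\<beta> \<le> fs * \<delta> / 2 / (4 * pi * d)"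
        proof -
          have "\<beta> = fs * \<delta> / 2 / (4 * pi * (c * Tmax))" by (simp add: \<beta>_def)
          also have "\<dots> \<le> fs * \<delta> / 2 / (4 * pi * d)"
            using d fs \<delta> c T by (intro divide_left_mono mult_left_mono) auto
          finally show ?thesis .
        qed
        ultimately show ?thesis by linarith
      qed
      define G where "G n = Gamma_comp c kappa rmic fs K a r 0 n" for n
      have s0: "(\<Sum>n<N. G n) \<ge> \<beta> * sum a {..<K}"
      proof -
        have "(\<Sum>n<N. G n) = (\<Sum>j<K. a j * (\<Sum>n<N. gamma_comp c kappa rmic fs (r j) 0 n))"
          unfolding G_def Gamma_comp_def by (simp add: sum_distrib_left sum.swap[of _ "{..<N}"])
        also have "\<dots> \<ge> (\<Sum>j<K. a j * \<beta>)"
          using g ar by (intro sum_mono mult_left_mono) auto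
        finally show ?thesis by (simp add: sum_distrib_left sum_distrib_right mult.commute)
      qed
      have nn: "0 \<le> \<beta> * sum a {..<K}" using \<beta> ar by (intro mult_nonneg_nonneg sum_nonneg) auto
      have sq: "(\<Sum>n<N. G n)\<^sup>2 \<le> (\<Sum>n<N. (G n)\<^sup>2) * real N"
        using sum_squared_le_sum_of_squares[of G "{..<N}"] by simp
      have "(\<Sum>n<N. (G n)\<^sup>2) \<le> (\<Sum>m<M. \<Sum>n<N. (Gamma_comp c kappa rmic fs K a r m n)\<^sup>2)"
        using member_le_sum[of 0 "{..<M}" "\<lambda>m. \<Sum>n<N. (Gamma_comp c kappa rmic fs K a r m n)\<^sup>2"] assms(3)
        by (simp add: G_def sum_nonneg)
      moreover have "(\<beta> * sum a {..<K})\<^sup>2 \<le> (\<Sum>n<N. G n)\<^sup>2"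
        using s0 nn by (intro power_mono) auto
      ultimately have "(\<beta> * sum a {..<K})\<^sup>2 / real N \<le> (\<Sum>m<M. \<Sum>n<N. (Gamma_comp c kappa rmic fs K a r m n)\<^sup>2)"
        using sq N by (simp add: divide_le_eq) (smt (verit) mult_right_mono of_nat_0_le_iff)
      moreover have "(\<beta> / sqrt (real N) * sum a {..<K})\<^sup>2 = (\<beta> * sum a {..<K})\<^sup>2 / real N"
        by (simp add: power_divide power_mult_distrib)
      ultimately show "\<beta> / sqrt (real N) * sum a {..<K} \<le> Gamma_norm c kappa M rmic N fs K a r"
        unfolding Gamma_norm_def by (intro real_le_rsqrt) simp
    qed
  qed
qed

end
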